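(* For any $n\ge 1$, the $h$-polynomial of $(\mathsf{Tr}(n),\preccurlyeq)$ is $$\mathrm{d}_{\mathsf{Tr}(n)}(1,y)=(y+1)^{n-2}\left(y^2+(n+1)y+1\right).$$
   Context: A triword of size $n$ is a word $u=u_1\cdots u_n$ with $u_i\in\{0,1,2\}$, $u_1\ne 2$, and such that $u_i=0$ implies $u_j\neq 1$ for all $j>i$; $\mathsf{Tr}(n)$ is their set, ordered componentwise ($u\preccurlyeq v$ iff $u_i\le v_i$ for all $i$). For a finite poset $\mathcal{P}$, its degree polynomial is $\mathrm{d}_{\mathcal{P}}(x,y)=\sum_{u\in\mathcal{P}}x^{\mathrm{in}(u)}y^{\mathrm{out}(u)}$, where $\mathrm{in}(u)$ (resp. $\mathrm{out}(u)$) is the number of elements covered by (resp. covering) $u$; its $h$-polynomial is $\mathrm{d}_{\mathcal{P}}(1,y)$. (For $n=1$ the formula is read as the rational expression, equal to $y+1$.) *)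

theory Defs
  imports Complex_Main
begin

definition triwords :: "nat \<Rightarrow> nat list set" where
  "triwords n = {u. length u = n \<and> set u \<subseteq> {0,1,2} \<and> (n > 0 \<longrightarrow> u ! 0 \<noteq> 2) \<and>
      (\<forall>i j. i < j \<and> j < n \<and> u ! i = 0 \<longrightarrow> u ! j \<noteq> 1)}"

definition tri_le :: "nat list \<Rightarrow> nat list \<Rightarrow> bool" where
  "tri_le u v \<longleftrightarrow> length u = length v \<and> (\<forall>i < length u. u ! i \<le> v ! i)"

definition covers :: "'a set \<Rightarrow> ('a \<Rightarrow> 'a \<Rightarrow> bool) \<Rightarrow> 'a \<Rightarrow> 'a \<Rightarrow> bool" where
  "covers P le u v \<longleftrightarrow> u \<in> P \<and> v \<in> P \<and> le u v \<and> u \<noteq> v \<and>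
     \<not> (\<exists>w\<in>P. le u w \<and> le w v \<and> w \<noteq> u \<and> w \<noteq> v)"

definition in_deg :: "'a set \<Rightarrow> ('a \<Rightarrow> 'a \<Rightarrow> bool) \<Rightarrow> 'a \<Rightarrow> nat" where
  "in_deg P le u = card {v \<in> P. covers P le v u}"

definition out_deg :: "'a set \<Rightarrow> ('a \<Rightarrow> 'a \<Rightarrow> bool) \<Rightarrow> 'a \<Rightarrow> nat" where
  "out_deg P le u = card {v \<in> P. covers P le u v}"

definition degree_poly :: "'a set \<Rightarrow> ('a \<Rightarrow> 'a \<Rightarrow> bool) \<Rightarrow> 'b::comm_semiring_1 \<Rightarrow> 'b \<Rightarrow> 'b" where
  "degree_poly P le x y = (\<Sum>u\<in>P. x ^ in_deg P le u * y ^ out_deg P le u)"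

definition h_poly :: "'a set \<Rightarrow> ('a \<Rightarrow> 'a \<Rightarrow> bool) \<Rightarrow> 'b::comm_semiring_1 \<Rightarrow> 'b" where
  "h_poly P le y = degree_poly P le 1 y"

end

theory Submission imports Defs begin

definition mv :: "nat list \<Rightarrow> nat \<Rightarrow> nat" where
  "mv u i = (if u!i = 0 \<and> (\<forall>j<i. u!j \<noteq> 0) then 1 else 2)"

definition okidx :: "nat list \<Rightarrow> nat \<Rightarrow> bool" where
  "okidx u i \<longleftrightarrow> i < length u \<and> (u!i = 0 \<or> (u!i = 1 \<and> i > 0))"

lemma tw_le2: assumes "u \<in> triwords n" "k < n" shows "u!k \<le> 2"
proof -
  have "set u \<subseteq> {0,1,2}" "length u = n" using assms(1) unfolding triwords_def by auto
  then have "u!k \<in> {0,1,2}" using nth_mem assms(2) by blast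
  then show ?thesis by auto
qed

lemma mv_12: "mv u i = 1 \<or> mv u i = 2"
  unfolding mv_def by auto

lemma move_in:
  assumes u: "u \<in> triwords n" and i: "okidx u i"
  shows "u[i := mv u i] \<in> triwords n"
proof -
  have L: "length u = n" and S: "set u \<subseteq> {0,1,2}" and Z: "n > 0 \<longrightarrow> u!0 \<noteq> 2"
    and R: "\<And>a b. a < b \<Longrightarrow> b < n \<Longrightarrow> u!a = 0 \<Longrightarrow> u!b \<noteq> 1"
    using u unfolding triwords_def by auto
  have iv: "i < n" using i L unfolding okidx_def by auto
  have "set (u[i := mv u i]) \<subseteq> {0,1,2}"
  proof -
    have "set (u[i := mv u i]) \<subseteq> insert (mv u i) (set u)" by (rule set_update_subset_insert)
    moreover have "mv u i \<in> {0,1,2}" using mv_12[of u i] by auto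
    ultimately show ?thesis using S by blast
  qed
  moreover have "n > 0 \<longrightarrow> u[i := mv u i] ! 0 \<noteq> 2"
  proof (cases "i = 0")
    case True
    then have "u!0 = 0" using i unfolding okidx_def by auto
    then have "mv u i = 1" using True unfolding mv_def by auto
    then show ?thesis using True iv L by simp
  next
    case False
    then show ?thesis using Z by simp
  qed
  moreover have "\<forall>a b. a < b \<and> b < n \<and> u[i := mv u i] ! a = 0 \<longrightarrow> u[i := mv u i] ! b \<noteq> 1"
  proof (intro allI impI)
    fix a b assume h: "a < b \<and> b < n \<and> u[i := mv u i] ! a = 0"
    have ai: "a \<noteq> i"
    proof
      assume "a = i"
      then have "u[i := mv u i] ! a = mv u i" using iv L by simp
      then show False using h mv_12[of u i] by auto
    qed
    then have ua: "u!a = 0" using h by simp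
    show "u[i := mv u i] ! b \<noteq> 1"
    proof (cases "b = i")
      case True
      have "mv u i \<noteq> 1"
      proof
        assume "mv u i = 1"
        then have "\<forall>j<i. u!j \<noteq> 0" unfolding mv_def by (auto split: if_splits)
        then show False using ua h True by auto
      qed
      then show ?thesis using True iv L by simp
    next
      case False
      then show ?thesis using h R[of a b] ua by simp
    qed
  qed
  ultimately show ?thesis using L unfolding triwords_def by auto
qed

lemma move_le:
  assumes u: "u \<in> triwords n" and i: "okidx u i"
  shows "tri_le u (u[i := mv u i])"
  using i unfolding tri_le_def okidx_def mv_def by (auto simp: nth_list_update)

lemma move_ne:
  assumes i: "okidx u i"
  shows "u[i := mv u i] ! i \<noteq> u ! i"
  using i unfolding okidx_def mv_def by auto

lemma move_cover:
  assumes u: "u \<in> triwords n" and i: "okidx u i"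
  shows "covers (triwords n) tri_le u (u[i := mv u i])"
proof -
  let ?v = "u[i := mv u i]"
  have L: "length u = n" using u unfolding triwords_def by auto
  have iv: "i < length u" using i unfolding okidx_def by auto
  have ne: "u \<noteq> ?v" using move_ne[OF i] iv by (metis nth_list_update_eq)
  have nb: "\<not> (\<exists>w\<in>triwords n. tri_le u w \<and> tri_le w ?v \<and> w \<noteq> u \<and> w \<noteq> ?v)"
  proof
    assume "\<exists>w\<in>triwords n. tri_le u w \<and> tri_le w ?v \<and> w \<noteq> u \<and> w \<noteq> ?v"
    then obtain w where w: "w \<in> triwords n" "tri_le u w" "tri_le w ?v" "w \<noteq> u" "w \<noteq> ?v" by blast
    have Lw: "length w = n" using w(1) unfolding triwords_def by auto
    have eq: "\<And>k. k < n \<Longrightarrow> k \<noteq> i \<Longrightarrow> w!k = u!k"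
      using w(2,3) L unfolding tri_le_def by (metis le_antisym nth_list_update_neq)
    have lo: "u!i \<le> w!i" and hi: "w!i \<le> mv u i" using w(2,3) L iv unfolding tri_le_def by auto
    have "w!i \<noteq> u!i"
    proof
      assume "w!i = u!i"
      then have "w = u" using eq Lw L by (metis nth_equalityI)
      then show False using w(4) by simp
    qed
    moreover have "w!i \<noteq> mv u i"
    proof
      assume "w!i = mv u i"
      then have "w = ?v" using eq Lw L iv by (intro nth_equalityI) (auto simp: nth_list_update)
      then show False using w(5) by simp
    qed
    ultimately have "u!i = 0" "mv u i = 2" "w!i = 1" using lo hi i unfolding okidx_def mv_def
      by (auto split: if_splits)
    then obtain j where "j < i" "u!j = 0" unfolding mv_def by (auto split: if_splits)
    then have "w!j = 0" using eq L iv by auto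
    then show False using w(1) \<open>j < i\<close> \<open>w!i = 1\<close> iv L unfolding triwords_def by auto
  qed
  show ?thesis unfolding covers_def
    using u move_in[OF u i] move_le[OF u i] ne nb by blast
qed

lemma cover_move:
  assumes u: "u \<in> triwords n" and c: "covers (triwords n) tri_le u v"
  shows "\<exists>i. okidx u i \<and> v = u[i := mv u i]"
proof -
  have v: "v \<in> triwords n" and le: "tri_le u v" and ne: "u \<noteq> v"
    and nb: "\<And>w. w \<in> triwords n \<Longrightarrow> tri_le u w \<Longrightarrow> tri_le w v \<Longrightarrow> w = u \<or> w = v"
    using c unfolding covers_def by auto
  have L: "length u = n" and Lv: "length v = n" using u v unfolding triwords_def by auto
  have lek: "\<And>k. k < n \<Longrightarrow> u!k \<le> v!k" using le L unfolding tri_le_def by auto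
  have "\<exists>k. k < n \<and> u!k \<noteq> v!k" using ne L Lv nth_equalityI by metis
  define i where "i = (LEAST k. k < n \<and> u!k \<noteq> v!k)"
  have i: "i < n" "u!i \<noteq> v!i" using LeastI_ex[OF \<open>\<exists>k. k < n \<and> u!k \<noteq> v!k\<close>] unfolding i_def by auto
  have bef: "u!j = v!j" if "j < i" for j
  proof -
    have "\<not> (j < n \<and> u!j \<noteq> v!j)" using not_less_Least[of j "\<lambda>k. k < n \<and> u!k \<noteq> v!k"] that
      unfolding i_def by blast
    then show ?thesis using that i(1) by auto
  qed
  have lt: "u!i < v!i" using lek[OF i(1)] i(2) by simp
  have v2: "v!i \<le> 2" using tw_le2[OF v i(1)] .
  have v0: "v!0 \<noteq> 2" using v i unfolding triwords_def by auto
  have oi: "okidx u i"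
    using lt v2 v0 i L unfolding okidx_def by (cases "i = 0") auto
  have mvle: "mv u i \<le> v!i"
  proof (cases "u!i = 0 \<and> (\<forall>j<i. u!j \<noteq> 0)")
    case True then show ?thesis using lt unfolding mv_def by auto
  next
    case False
    show ?thesis
    proof (cases "u!i = 1")
      case True then show ?thesis using lt v2 unfolding mv_def by auto
    next
      case F2: False
      then have "u!i = 0" using oi unfolding okidx_def by auto
      then obtain j where j: "j < i" "u!j = 0" using False by auto
      then have "v!j = 0" using bef by auto
      then have "v!i \<noteq> 1" using v j(1) i(1) unfolding triwords_def by auto
      then show ?thesis using lt v2 unfolding mv_def by auto
    qed
  qed
  have mle: "tri_le (u[i := mv u i]) v"
    unfolding tri_le_def using L Lv lek mvle i(1) by (auto simp: nth_list_update)
  have "u[i := mv u i] = u \<or> u[i := mv u i] = v"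
    using nb[OF move_in[OF u oi] move_le[OF u oi] mle] .
  moreover have "u[i := mv u i] \<noteq> u" using move_ne[OF oi] i(1) L by (metis nth_list_update_eq)
  ultimately show ?thesis using oi by auto
qed

lemma out_deg_eq:
  assumes u: "u \<in> triwords n"
  shows "out_deg (triwords n) tri_le u = card {i. okidx u i}"
proof -
  have "{v \<in> triwords n. covers (triwords n) tri_le u v} = (\<lambda>i. u[i := mv u i]) ` {i. okidx u i}"
    using cover_move[OF u] move_cover[OF u] move_in[OF u] unfolding covers_def by blast
  moreover have "inj_on (\<lambda>i. u[i := mv u i]) {i. okidx u i}"
  proof (rule inj_onI)
    fix a b assume a: "a \<in> {i. okidx u i}" and b: "b \<in> {i. okidx u i}"
      and e: "u[a := mv u a] = u[b := mv u b]"
    show "a = b"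
    proof (rule ccontr)
      assume "a \<noteq> b"
      then have "u[a := mv u a] ! a = u ! a" using e by (metis nth_list_update_neq)
      then show False using move_ne a by auto
    qed
  qed
  ultimately show ?thesis unfolding out_deg_def by (simp add: card_image)
qed



fun ok :: "nat list \<Rightarrow> bool" where
  "ok [] = True"
| "ok (x # xs) = ((x = 1 \<or> x = 2) \<and> ok xs \<or> x = 0 \<and> set xs \<subseteq> {0,2})"

lemma ok_iff: "ok u \<longleftrightarrow> set u \<subseteq> {0,1,2} \<and> (\<forall>i j. i < j \<and> j < length u \<and> u!i = 0 \<longrightarrow> u!j \<noteq> 1)"
proof (induction u)
  case Nil then show ?case by simp
next
  case (Cons x xs)
  show ?case
  proof
    assume h: "ok (x # xs)"
    show "set (x#xs) \<subseteq> {0,1,2} \<and> (\<forall>i j. i < j \<and> j < length (x#xs) \<and> (x#xs)!i = 0 \<longrightarrow> (x#xs)!j \<noteq> 1)"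
    proof (cases "x = 0")
      case True
      then have s: "set xs \<subseteq> {0,2}" using h by simp
      have "\<forall>i j. i < j \<and> j < length (x#xs) \<and> (x#xs)!i = 0 \<longrightarrow> (x#xs)!j \<noteq> 1"
      proof (intro allI impI)
        fix i j assume "i < j \<and> j < length (x#xs) \<and> (x#xs)!i = 0"
        then obtain k where "j = Suc k" "k < length xs" by (cases j) auto
        then have "(x#xs)!j \<in> set xs" by simp
        then show "(x#xs)!j \<noteq> 1" using s by auto
      qed
      then show ?thesis using True s by auto
    next
      case False
      then have xx: "x = 1 \<or> x = 2" and o: "ok xs" using h by auto
      have I: "\<forall>i j. i < j \<and> j < length xs \<and> xs!i = 0 \<longrightarrow> xs!j \<noteq> 1" using Cons.IH o by blast
      have "\<forall>i j. i < j \<and> j < length (x#xs) \<and> (x#xs)!i = 0 \<longrightarrow> (x#xs)!j \<noteq> 1"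
      proof (intro allI impI)
        fix i j assume a: "i < j \<and> j < length (x#xs) \<and> (x#xs)!i = 0"
        then obtain k where k: "i = Suc k" using xx by (cases i) auto
        obtain l where l: "j = Suc l" using a by (cases j) auto
        show "(x#xs)!j \<noteq> 1" using I a k l by auto
      qed
      then show ?thesis using xx Cons.IH o by auto
    qed
  next
    assume h: "set (x#xs) \<subseteq> {0,1,2} \<and> (\<forall>i j. i < j \<and> j < length (x#xs) \<and> (x#xs)!i = 0 \<longrightarrow> (x#xs)!j \<noteq> 1)"
    have I: "\<forall>i j. i < j \<and> j < length xs \<and> xs!i = 0 \<longrightarrow> xs!j \<noteq> 1"
    proof (intro allI impI)
      fix i j assume "i < j \<and> j < length xs \<and> xs!i = 0"
      then show "xs!j \<noteq> 1" using h[THEN conjunct2, rule_format, of "Suc i" "Suc j"] by simp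
    qed
    show "ok (x#xs)"
    proof (cases "x = 0")
      case True
      have "set xs \<subseteq> {0,2}"
      proof
        fix c assume "c \<in> set xs"
        then obtain j where j: "j < length xs" "xs!j = c" by (auto simp: in_set_conv_nth)
        have "(x#xs)!(Suc j) \<noteq> 1" using h[THEN conjunct2, rule_format, of 0 "Suc j"] True j by simp
        moreover have "c \<in> {0,1,2}" using h j nth_mem[OF j(1)] by auto
        ultimately show "c \<in> {0,2}" using j by auto
      qed
      then show ?thesis using True by simp
    next
      case False
      then show ?thesis using h I Cons.IH by auto
    qed
  qed
qed

lemma triwords_alt: "triwords n = {u. length u = n \<and> ok u \<and> (n > 0 \<longrightarrow> u!0 \<noteq> 2)}"
  unfolding triwords_def ok_iff by auto

definition Bs :: "nat \<Rightarrow> nat list set" where "Bs m = {w. length w = m \<and> set w \<subseteq> {0,2}}"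
definition As :: "nat \<Rightarrow> nat list set" where "As m = {w. length w = m \<and> ok w}"

lemma fin_lists: "finite {w :: nat list. length w = m \<and> set w \<subseteq> {0,1,2}}"
  using finite_lists_length_eq[of "{0,1,2::nat}" m] by (simp add: conj_commute)

lemma fin_Bs: "finite (Bs m)"
  by (rule finite_subset[OF _ fin_lists[of m]]) (auto simp: Bs_def)
lemma fin_As: "finite (As m)"
  by (rule finite_subset[OF _ fin_lists[of m]]) (auto simp: As_def ok_iff)

lemma Bs_Suc: "Bs (Suc m) = (\<lambda>w. 0 # w) ` Bs m \<union> (\<lambda>w. 2 # w) ` Bs m"
  unfolding Bs_def by (auto simp: length_Suc_conv image_iff)

lemma As_Suc: "As (Suc m) = (\<lambda>w. 0 # w) ` Bs m \<union> ((\<lambda>w. 1 # w) ` As m \<union> (\<lambda>w. 2 # w) ` As m)"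
  unfolding Bs_def As_def by (auto simp: length_Suc_conv image_iff)

lemma tw_Suc: "triwords (Suc m) = (\<lambda>w. 0 # w) ` Bs m \<union> (\<lambda>w. 1 # w) ` As m"
  unfolding triwords_alt Bs_def As_def by (auto simp: length_Suc_conv image_iff)

definition g :: "nat list \<Rightarrow> nat" where "g w = length (filter (\<lambda>c. c \<noteq> 2) w)"

lemma g_cons: "g (x # w) = (if x \<noteq> 2 then Suc (g w) else g w)"
  unfolding g_def by simp

lemma sum_Bs: "(\<Sum>w\<in>Bs m. (y::real) ^ g w) = (1 + y) ^ m"
proof (induction m)
  case 0
  have "Bs 0 = {[]}" by (auto simp: Bs_def)
  then show ?case by (simp add: g_def)
next
  case (Suc m)
  have "(\<Sum>w\<in>Bs (Suc m). y ^ g w) = (\<Sum>w\<in>(\<lambda>w. 0 # w) ` Bs m. y ^ g w) + (\<Sum>w\<in>(\<lambda>w. 2 # w) ` Bs m. y ^ g w)"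
    unfolding Bs_Suc by (rule sum.union_disjoint) (auto simp: fin_Bs)
  also have "\<dots> = (\<Sum>w\<in>Bs m. y ^ g (0 # w)) + (\<Sum>w\<in>Bs m. y ^ g (2 # w))"
    by (simp add: sum.reindex inj_on_def)
  also have "\<dots> = (1 + y) ^ Suc m" using Suc by (simp add: g_cons sum_distrib_left[symmetric] algebra_simps)
  finally show ?case .
qed

lemma sum_As: "(\<Sum>w\<in>As m. (y::real) ^ g w) = (1 + y) ^ m + real m * y * (1 + y) ^ (m - 1)"
proof (induction m)
  case 0
  have "As 0 = {[]}" by (auto simp: As_def)
  then show ?case by (simp add: g_def)
next
  case (Suc m)
  have "(\<Sum>w\<in>As (Suc m). y ^ g w) = (\<Sum>w\<in>(\<lambda>w. 0 # w) ` Bs m. y ^ g w) +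
     ((\<Sum>w\<in>(\<lambda>w. 1 # w) ` As m. y ^ g w) + (\<Sum>w\<in>(\<lambda>w. 2 # w) ` As m. y ^ g w))"
    unfolding As_Suc
    by (subst sum.union_disjoint, auto simp: fin_Bs fin_As, subst sum.union_disjoint, auto simp: fin_As)
  also have "\<dots> = (\<Sum>w\<in>Bs m. y ^ g (0 # w)) + ((\<Sum>w\<in>As m. y ^ g (1 # w)) + (\<Sum>w\<in>As m. y ^ g (2 # w)))"
    by (simp add: sum.reindex inj_on_def)
  also have "\<dots> = y * (1 + y) ^ m + (1 + y) * (\<Sum>w\<in>As m. y ^ g w)"
    using sum_Bs[where y=y and m=m] by (simp add: g_cons sum_distrib_left[symmetric] algebra_simps)
  also have "\<dots> = (1 + y) ^ Suc m + real (Suc m) * y * (1 + y) ^ (Suc m - 1)"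
    using Suc by (cases m) (simp_all add: algebra_simps)
  finally show ?case .
qed


lemma okidx_set:
  assumes "set u \<subseteq> {0,1,2}" "u \<noteq> []"
  shows "{i. okidx u i} = {i. i < length u \<and> u!i \<noteq> 2} - (if u!0 = 1 then {0} else {})"
proof -
  have h: "\<And>i. i < length u \<Longrightarrow> u!i \<in> {0,1,2}" using assms nth_mem by blast
  show ?thesis
  proof (rule set_eqI)
    fix i
    show "i \<in> {i. okidx u i} \<longleftrightarrow> i \<in> {i. i < length u \<and> u!i \<noteq> 2} - (if u!0 = 1 then {0} else {})"
      using h[of i] assms(2) by (cases "i = 0") (auto simp: okidx_def)
  qed
qed

lemma card_okidx:
  assumes "set u \<subseteq> {0,1,2}" "u \<noteq> []"
  shows "card {i. okidx u i} = g u - (if u!0 = 1 then 1 else 0)"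
proof -
  have g: "g u = card {i. i < length u \<and> u!i \<noteq> 2}" unfolding g_def by (rule length_filter_conv_card)
  show ?thesis
  proof (cases "u!0 = 1")
    case True
    have "0 \<in> {i. i < length u \<and> u!i \<noteq> 2}" using True assms(2) by auto
    then show ?thesis using okidx_set[OF assms] True g by (simp add: card_Diff_singleton)
  next
    case False
    then show ?thesis using okidx_set[OF assms] g by simp
  qed
qed

lemma out_cons0:
  assumes "w \<in> Bs m"
  shows "out_deg (triwords (Suc m)) tri_le (0 # w) = Suc (g w)"
proof -
  have u: "0 # w \<in> triwords (Suc m)" using assms tw_Suc by blast
  have "set (0 # w) \<subseteq> {0,1,2}" using u unfolding triwords_def by blast
  then show ?thesis using out_deg_eq[OF u] card_okidx[of "0 # w"] by (simp add: g_cons)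
qed

lemma out_cons1:
  assumes "w \<in> As m"
  shows "out_deg (triwords (Suc m)) tri_le (1 # w) = g w"
proof -
  have u: "1 # w \<in> triwords (Suc m)" using assms tw_Suc by blast
  have "set (1 # w) \<subseteq> {0,1,2}" using u unfolding triwords_def by blast
  then show ?thesis using out_deg_eq[OF u] card_okidx[of "1 # w"] by (simp add: g_cons)
qed

theorem proposition3p3:
  fixes n :: nat and y :: real
  assumes "n \<ge> 1"
  shows "h_poly (triwords n) tri_le y =
           (if n = 1 then y + 1 else (y + 1) ^ (n - 2) * (y\<^sup>2 + (real n + 1) * y + 1))"
proof -
  obtain m where n: "n = Suc m" using assms by (cases n) auto
  have "h_poly (triwords n) tri_le y = (\<Sum>u\<in>triwords (Suc m). y ^ out_deg (triwords (Suc m)) tri_le u)"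
    unfolding h_poly_def degree_poly_def n by simp
  also have "\<dots> = (\<Sum>u\<in>(\<lambda>w. 0 # w) ` Bs m. y ^ out_deg (triwords (Suc m)) tri_le u)
      + (\<Sum>u\<in>(\<lambda>w. 1 # w) ` As m. y ^ out_deg (triwords (Suc m)) tri_le u)"
    unfolding tw_Suc by (rule sum.union_disjoint) (auto simp: fin_Bs fin_As)
  also have "\<dots> = (\<Sum>w\<in>Bs m. y ^ out_deg (triwords (Suc m)) tri_le (0 # w))
      + (\<Sum>w\<in>As m. y ^ out_deg (triwords (Suc m)) tri_le (1 # w))"
    by (simp add: sum.reindex inj_on_def)
  also have "\<dots> = (\<Sum>w\<in>Bs m. y * y ^ g w) + (\<Sum>w\<in>As m. y ^ g w)"
    using out_cons0[of _ m] out_cons1[of _ m] by (intro arg_cong2[where f="(+)"] sum.cong) auto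
  also have "\<dots> = y * (1 + y) ^ m + ((1 + y) ^ m + real m * y * (1 + y) ^ (m - 1))"
    using sum_Bs[where y=y and m=m] sum_As[where y=y and m=m] by (simp add: sum_distrib_left[symmetric])
  also have "\<dots> = (if n = 1 then y + 1 else (y + 1) ^ (n - 2) * (y\<^sup>2 + (real n + 1) * y + 1))"
  proof (cases m)
    case 0 then show ?thesis using n by simp
  next
    case (Suc k)
    then show ?thesis using n by (simp add: power2_eq_square algebra_simps)
  qed
  finally show ?thesis .
qed

end
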